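(* Let $X=\{x_0,\ldots,x_m\}$ and $\tilde X=\{\tilde x_1,\ldots,\tilde x_q\}$ (commuting). The multiplicative static feedback product $c\,\bar{@}\,d:=c\,\tilde\circ\,\delta_{(d^{-1}\circ c)^{\circ-1}}$ (with $d^{-1}\circ c$ the Wiener-Fliess composition product) is a right group action of the Abelian group $(\mathbb{R}^m_{pi}[[\tilde X]],\cdot,\mathbb 1)$ on the set of proper series in $\mathbb{R}^q\langle\langle X\rangle\rangle$; that is, for all proper $c\in\mathbb{R}^q\langle\langle X\rangle\rangle$ and all purely improper $d_1,d_2\in\mathbb{R}^m[[\tilde X]]$, $c\,\bar{@}\,\mathbb 1=c$ and $(c\,\bar{@}\,d_1)\,\bar{@}\,d_2=c\,\bar{@}\,(d_1\cdot d_2)$.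
   Context: Series conventions: $\mathbb{R}^\ell\langle\langle X\rangle\rangle$ noncommutative formal power series with coefficients in $\mathbb{R}^\ell$, $\mathbb{R}^m[[\tilde X]]$ commutative formal power series with coefficients in $\mathbb{R}^m$; componentwise products; proper = zero constant term; purely improper = each component has nonzero constant term; $\mathbb{R}^m_{pi}[[\tilde X]]$ the purely improper commutative series; $\cdot$ the Cauchy product $(d\cdot d',\eta)=\sum_{\zeta\nu=\eta}(d,\zeta)(d',\nu)$; $d^{-1}$ the Cauchy inverse; $\mathbb 1=[1\cdots1]^t$. Shuffle product $\sqcup\!\sqcup$: bilinear, $(x_i\eta)\sqcup\!\sqcup(x_j\xi)=x_i(\eta\sqcup\!\sqcup x_j\xi)+x_j(x_i\eta\sqcup\!\sqcup\xi)$, $\eta\sqcup\!\sqcup\emptyset=\emptyset\sqcup\!\sqcup\eta=\eta$; $g^{\sqcup\!\sqcup-1}$ componentwise shuffle inverse. Wiener-Fliess composition for proper $c$: $d\circ c=\sum_{\tilde\eta}(d,\tilde\eta)c^{\sqcup\!\sqcup\tilde\eta}$, $c^{\sqcup\!\sqcup\emptyset}=1$, $c^{\sqcup\!\sqcup\tilde x_i\tilde\eta}=c_i\sqcup\!\sqcup c^{\sqcup\!\sqcup\tilde\eta}$. Multiplicative mixed composition: $c\,\tilde\circ\,\delta_g=\sum_\eta(c,\eta)\bar\phi_g(\eta)(\mathbf 1)$, $\mathbf 1=1\emptyset$, $\bar\phi_g(x_0)(w)=x_0w$, $\bar\phi_g(x_i)(w)=x_i(g_i\sqcup\!\sqcup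 w)$ ($i\ge1$), extended multiplicatively (concatenation to composition). For purely improper $g\in\mathbb{R}^m\langle\langle X\rangle\rangle$, $g^{\circ-1}$ is the unique $h\in\mathbb{R}^m\langle\langle X\rangle\rangle$ with $h=g^{\sqcup\!\sqcup-1}\,\tilde\circ\,\delta_h$. *)

theory Defs
  imports "HOL-Analysis.Analysis" "HOL-Library.Multiset"
begin

text \<open>Alphabet X = {x_0,...,x_m} is represented by the type 'm option, with
  None = x_0 and Some i = x_i (i ranging over a finite type 'm of m elements).
  A scalar noncommutative series is a function from words to coefficients;
  a series in R^l<<X>> is a function from a finite index type to scalar series.
  Commutative monomials over X~ = {x~_1,...,x~_q} are multisets over a finite type 'q.\<close>

type_synonym 'a ncs = "'a list \<Rightarrow> real"

definition one_s :: "'a ncs" where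
  "one_s w = (if w = [] then 1 else 0)"

definition lcat :: "'a \<Rightarrow> 'a ncs \<Rightarrow> 'a ncs" where
  "lcat a s w = (case w of [] \<Rightarrow> 0 | b # w' \<Rightarrow> if b = a then s w' else 0)"

fun shw :: "'a list \<Rightarrow> 'a list \<Rightarrow> 'a ncs" where
  "shw [] v = (\<lambda>w. if w = v then 1 else 0)"
| "shw u [] = (\<lambda>w. if w = u then 1 else 0)"
| "shw (a # u) (b # v) = (\<lambda>w. lcat a (shw u (b # v)) w + lcat b (shw (a # u) v) w)"

definition shuffle :: "'a ncs \<Rightarrow> 'a ncs \<Rightarrow> 'a ncs" where
  "shuffle c d w = infsum (\<lambda>(u, v). c u * d v * shw u v w) UNIV"

definition shuffle_inv :: "'a ncs \<Rightarrow> 'a ncs" where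
  "shuffle_inv g = (THE h. shuffle g h = one_s)"

type_synonym 'q cs = "'q multiset \<Rightarrow> real"

definition one_c :: "'q cs" where
  "one_c \<eta> = (if \<eta> = {#} then 1 else 0)"

definition cauchy :: "'q cs \<Rightarrow> 'q cs \<Rightarrow> 'q cs" where
  "cauchy d d' \<eta> = (\<Sum>(\<zeta>, \<nu>) \<in> {(\<zeta>, \<nu>). \<zeta> + \<nu> = \<eta>}. d \<zeta> * d' \<nu>)"

definition cauchy_inv :: "'q cs \<Rightarrow> 'q cs" where
  "cauchy_inv d = (THE h. cauchy d h = one_c)"

definition proper :: "('i \<Rightarrow> 'a ncs) \<Rightarrow> bool" where
  "proper c \<longleftrightarrow> (\<forall>j. c j [] = 0)"

definition purely_improper_c :: "('i \<Rightarrow> 'q cs) \<Rightarrow> bool" where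
  "purely_improper_c d \<longleftrightarrow> (\<forall>i. d i {#} \<noteq> 0)"

definition shuf_pow :: "('q \<Rightarrow> 'a ncs) \<Rightarrow> 'q multiset \<Rightarrow> 'a ncs" where
  "shuf_pow c \<eta> = fold_mset (\<lambda>i s. shuffle (c i) s) one_s \<eta>"

definition wf_comp :: "('i \<Rightarrow> 'q cs) \<Rightarrow> ('q \<Rightarrow> 'a ncs) \<Rightarrow> ('i \<Rightarrow> 'a ncs)" where
  "wf_comp d c = (\<lambda>i w. infsum (\<lambda>\<eta>. d i \<eta> * shuf_pow c \<eta> w) UNIV)"

text \<open>phibar_g(eta), extended multiplicatively (concatenation to composition)\<close>
fun phibar :: "('m \<Rightarrow> 'm option ncs) \<Rightarrow> 'm option list \<Rightarrow> 'm option ncs \<Rightarrow> 'm option ncs" where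
  "phibar g [] s = s"
| "phibar g (None # \<eta>) s = lcat None (phibar g \<eta> s)"
| "phibar g (Some i # \<eta>) s = lcat (Some i) (shuffle (g i) (phibar g \<eta> s))"

definition mixed_comp :: "'m option ncs \<Rightarrow> ('m \<Rightarrow> 'm option ncs) \<Rightarrow> 'm option ncs" where
  "mixed_comp c g w = infsum (\<lambda>\<eta>. c \<eta> * phibar g \<eta> one_s w) UNIV"

definition comp_inv :: "('m \<Rightarrow> 'm option ncs) \<Rightarrow> ('m \<Rightarrow> 'm option ncs)" where
  "comp_inv g = (THE h. h = (\<lambda>i. mixed_comp (shuffle_inv (g i)) h))"

definition sfb :: "('q \<Rightarrow> 'm option ncs) \<Rightarrow> ('m \<Rightarrow> 'q cs) \<Rightarrow> ('q \<Rightarrow> 'm option ncs)" where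
  "sfb c d = (\<lambda>j. mixed_comp (c j) (comp_inv (wf_comp (\<lambda>i. cauchy_inv (d i)) c)))"

end

theory Submission
  imports Defs
begin


lemma infsum_supp:
  fixes f :: "'x \<Rightarrow> real"
  assumes "finite S" "\<And>x. x \<notin> S \<Longrightarrow> f x = 0"
  shows "infsum f UNIV = sum f S"
proof -
  have "infsum f UNIV = infsum f S"
    by (rule infsum_cong_neutral) (use assms in auto)
  then show ?thesis using assms by simp
qed

lemma summable_supp:
  fixes f :: "'x \<Rightarrow> real"
  assumes "finite S" "\<And>x. x \<notin> S \<Longrightarrow> f x = 0"
  shows "f summable_on UNIV"
proof -
  have "f summable_on S" using assms by simp
  then show ?thesis
    by (rule summable_on_cong_neutral[THEN iffD1, rotated -1]) (use assms in auto)
qed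

definition D :: "'a \<Rightarrow> 'a ncs \<Rightarrow> 'a ncs" where
  "D a s = (\<lambda>w. s (a # w))"

lemma D_apply: "D a s w = s (a # w)" by (simp add: D_def)

lemma lcat_Nil[simp]: "lcat a s [] = 0" by (simp add: lcat_def)
lemma lcat_Cons[simp]: "lcat a s (b # w) = (if b = a then s w else 0)" by (simp add: lcat_def)

lemma shw_len: "shw u v w \<noteq> 0 \<Longrightarrow> length w = length u + length v \<and> set u \<subseteq> set w \<and> set v \<subseteq> set w"
proof (induction u v arbitrary: w rule: shw.induct)
  case (1 v)
  then show ?case by (simp split: if_splits)
next
  case (2 u)
  then show ?case by (auto split: if_splits)
next
  case (3 a u b v)
  note IH1 = 3(1) and IH2 = 3(2)
  show ?case
  proof (cases w)
    case Nil
    then show ?thesis using 3(3) by simp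
  next
    case (Cons x w')
    have "lcat a (shw u (b # v)) w + lcat b (shw (a # u) v) w \<noteq> 0" using 3(3) by simp
    then have "(x = a \<and> shw u (b # v) w' \<noteq> 0) \<or> (x = b \<and> shw (a # u) v w' \<noteq> 0)"
      using Cons by (simp split: if_splits)
    then show ?thesis
    proof
      assume h: "x = a \<and> shw u (b # v) w' \<noteq> 0"
      have "length w' = length u + length (b # v) \<and> set u \<subseteq> set w' \<and> set (b # v) \<subseteq> set w'"
        using IH1 h by blast
      then show ?thesis using h Cons by auto
    next
      assume h: "x = b \<and> shw (a # u) v w' \<noteq> 0"
      have "length w' = length (a # u) + length v \<and> set (a # u) \<subseteq> set w' \<and> set v \<subseteq> set w'"
        using IH2 h by blast
      then show ?thesis using h Cons by auto
    qed
  qed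
qed

lemma shw_Nil_right[simp]: "shw u [] w = (if w = u then 1 else 0)"
  by (cases u) auto

lemma shw_Nil: "shw u v [] = (if u = [] \<and> v = [] then 1 else 0)"
  by (cases u; cases v) auto

lemma shw_Cons: "shw u v (a # w) =
   (case u of [] \<Rightarrow> 0 | b # u' \<Rightarrow> if b = a then shw u' v w else 0) +
   (case v of [] \<Rightarrow> 0 | b # v' \<Rightarrow> if b = a then shw u v' w else 0)"
  by (cases u; cases v) auto

definition Sw :: "'a list \<Rightarrow> ('a list \<times> 'a list) set" where
  "Sw w = {xs. set xs \<subseteq> set w \<and> length xs \<le> length w} \<times> {xs. set xs \<subseteq> set w \<and> length xs \<le> length w}"

lemma finite_Sw: "finite (Sw w)"
  unfolding Sw_def by (intro finite_cartesian_product finite_lists_length_le) auto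

lemma shuffle_supp: "(u, v) \<notin> Sw w \<Longrightarrow> c u * d v * shw u v w = 0"
  using shw_len[of u v w] unfolding Sw_def by fastforce

lemma shuffle_summable: "(\<lambda>(u, v). c u * d v * shw u v w) summable_on UNIV"
  by (rule summable_supp[OF finite_Sw[of w]]) (auto intro: shuffle_supp)

lemma sh_Nil: "shuffle c d [] = c [] * d []"
proof -
  have "shuffle c d [] = sum (\<lambda>(u, v). c u * d v * shw u v []) {([], [])}"
    unfolding shuffle_def by (rule infsum_supp) (auto simp: shw_Nil split: if_splits)
  then show ?thesis by (simp add: shw_Nil)
qed

lemma sh_Cons: "shuffle c d (a # w) = shuffle (D a c) d w + shuffle c (D a d) w"
proof -
  let ?L = "\<lambda>(u::'a list, v::'a list). c u * d v * (case u of [] \<Rightarrow> 0 | b # u' \<Rightarrow> if b = a then shw u' v w else 0)"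
  let ?R = "\<lambda>(u::'a list, v::'a list). c u * d v * (case v of [] \<Rightarrow> 0 | b # v' \<Rightarrow> if b = a then shw u v' w else 0)"
  have eq: "(\<lambda>(u, v). c u * d v * shw u v (a # w)) = (\<lambda>p. ?L p + ?R p)"
    by (auto simp: shw_Cons algebra_simps split: list.splits)
  have sL: "?L summable_on UNIV"
  proof (rule summable_supp[OF finite_Sw[of "a # w"]])
    fix p assume "p \<notin> Sw (a # w)"
    then obtain u v where p: "p = (u, v)" "(u, v) \<notin> Sw (a # w)" by (cases p) auto
    show "?L p = 0"
    proof (cases u)
      case (Cons b u')
      show ?thesis
      proof (cases "b = a")
        case True
        have "shw u' v w = 0"
        proof (rule ccontr)
          assume "shw u' v w \<noteq> 0"
          from shw_len[OF this] p Cons True show False unfolding Sw_def by auto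
        qed
        then show ?thesis using p Cons by simp
      qed (use p Cons in simp)
    qed (use p in simp)
  qed
  have sR: "?R summable_on UNIV"
  proof (rule summable_supp[OF finite_Sw[of "a # w"]])
    fix p assume "p \<notin> Sw (a # w)"
    then obtain u v where p: "p = (u, v)" "(u, v) \<notin> Sw (a # w)" by (cases p) auto
    show "?R p = 0"
    proof (cases v)
      case (Cons b v')
      show ?thesis
      proof (cases "b = a")
        case True
        have "shw u v' w = 0"
        proof (rule ccontr)
          assume "shw u v' w \<noteq> 0"
          from shw_len[OF this] p Cons True show False unfolding Sw_def by auto
        qed
        then show ?thesis using p Cons by simp
      qed (use p Cons in simp)
    qed (use p in simp)
  qed
  have L: "infsum ?L UNIV = shuffle (D a c) d w"
  proof -
    let ?h = "\<lambda>(u', v::'a list). (a # u', v)"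
    have inj: "inj_on ?h UNIV" by (auto simp: inj_on_def)
    have "infsum ?L UNIV = infsum ?L (range ?h)"
    proof (rule infsum_cong_neutral)
      fix x assume x: "x \<in> UNIV - range ?h"
      obtain u v where xuv: "x = (u, v)" by (cases x)
      show "?L x = 0"
      proof (cases u)
        case (Cons b u')
        have "b \<noteq> a"
        proof
          assume "b = a"
          then have "x = ?h (u', v)" using xuv Cons by simp
          then show False using x by blast
        qed
        then show ?thesis using xuv Cons by simp
      qed (use xuv in simp)
    qed auto
    also have "\<dots> = infsum (?L \<circ> ?h) UNIV" by (rule infsum_reindex[OF inj])
    also have "\<dots> = shuffle (D a c) d w"
      unfolding shuffle_def by (rule infsum_cong) (simp add: split_beta D_apply)
    finally show ?thesis .
  qed
  have R: "infsum ?R UNIV = shuffle c (D a d) w"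
  proof -
    let ?h = "\<lambda>(u::'a list, v'). (u, a # v')"
    have inj: "inj_on ?h UNIV" by (auto simp: inj_on_def)
    have "infsum ?R UNIV = infsum ?R (range ?h)"
    proof (rule infsum_cong_neutral)
      fix x assume x: "x \<in> UNIV - range ?h"
      obtain u v where xuv: "x = (u, v)" by (cases x)
      show "?R x = 0"
      proof (cases v)
        case (Cons b v')
        have "b \<noteq> a"
        proof
          assume "b = a"
          then have "x = ?h (u, v')" using xuv Cons by simp
          then show False using x by blast
        qed
        then show ?thesis using xuv Cons by simp
      qed (use xuv in simp)
    qed auto
    also have "\<dots> = infsum (?R \<circ> ?h) UNIV" by (rule infsum_reindex[OF inj])
    also have "\<dots> = shuffle c (D a d) w"
      unfolding shuffle_def by (rule infsum_cong) (simp add: split_beta D_apply)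
    finally show ?thesis .
  qed
  have "shuffle c d (a # w) = infsum (\<lambda>p. ?L p + ?R p) UNIV"
    unfolding shuffle_def eq ..
  also have "\<dots> = infsum ?L UNIV + infsum ?R UNIV" by (rule infsum_add[OF sL sR])
  finally show ?thesis unfolding L R .
qed



definition eqto :: "nat \<Rightarrow> ('a list \<Rightarrow> real) \<Rightarrow> ('a list \<Rightarrow> real) \<Rightarrow> bool" where
  "eqto n s t \<longleftrightarrow> (\<forall>v. length v \<le> n \<longrightarrow> s v = t v)"

definition low :: "nat \<Rightarrow> ('a list \<Rightarrow> real) \<Rightarrow> bool" where
  "low k s \<longleftrightarrow> (\<forall>w. length w < k \<longrightarrow> s w = 0)"

lemma eqto_D: "eqto (Suc n) s t \<Longrightarrow> eqto n (D a s) (D a t)"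
  unfolding eqto_def D_def by auto

lemma sh_local: "eqto (length w) c c' \<Longrightarrow> eqto (length w) d d' \<Longrightarrow> shuffle c d w = shuffle c' d' w"
proof (induction w arbitrary: c c' d d')
  case Nil
  then show ?case by (simp add: sh_Nil eqto_def)
next
  case (Cons a w)
  have 1: "eqto (length w) (D a c) (D a c')" "eqto (length w) (D a d) (D a d')"
    using Cons.prems by (auto intro: eqto_D)
  have 2: "eqto (length w) c c'" "eqto (length w) d d'"
    using Cons.prems by (auto simp: eqto_def)
  show ?case unfolding sh_Cons using Cons.IH[OF 1(1) 2(2)] Cons.IH[OF 2(1) 1(2)] by simp
qed

lemma sh_comm: "shuffle c d w = shuffle d c w"
proof (induction w arbitrary: c d)
  case Nil
  then show ?case by (simp add: sh_Nil)
next
  case (Cons a w)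
  show ?case unfolding sh_Cons using Cons.IH by simp
qed

lemma sh_comm_fun: "shuffle c d = shuffle d c"
  using sh_comm by blast

lemma sh_add_left: "shuffle (\<lambda>v. c v + c' v) d w = shuffle c d w + shuffle c' d w"
proof (induction w arbitrary: c c' d)
  case Nil
  then show ?case by (simp add: sh_Nil algebra_simps)
next
  case (Cons a w)
  have e: "D a (\<lambda>v. c v + c' v) = (\<lambda>v. D a c v + D a c' v)" by (simp add: D_def)
  show ?case unfolding sh_Cons e Cons.IH by simp
qed

lemma sh_add_right: "shuffle d (\<lambda>v. c v + c' v) w = shuffle d c w + shuffle d c' w"
  by (simp only: sh_comm[of d] sh_add_left)

lemma sh_smult_left: "shuffle (\<lambda>v. r * c v) d w = r * shuffle c d w"
proof (induction w arbitrary: c d)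
  case Nil
  then show ?case by (simp add: sh_Nil algebra_simps)
next
  case (Cons a w)
  have e: "D a (\<lambda>v. r * c v) = (\<lambda>v. r * D a c v)" by (simp add: D_def)
  show ?case unfolding sh_Cons e Cons.IH by (simp add: algebra_simps)
qed

lemma sh_smult_right: "shuffle d (\<lambda>v. r * c v) w = r * shuffle d c w"
  by (simp only: sh_comm[of d] sh_smult_left)

lemma sh_zero_left: "shuffle (\<lambda>v. 0) d w = 0"
  using sh_smult_left[of 0 "\<lambda>v. 0" d w] by simp

lemma sh_zero_right: "shuffle d (\<lambda>v. 0) w = 0"
  by (simp only: sh_comm[of d] sh_zero_left)

lemma sh_sum_left: "shuffle (\<lambda>v. \<Sum>i\<in>A. f i v) d w = (\<Sum>i\<in>A. shuffle (f i) d w)"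
proof (cases "finite A")
  case True
  then show ?thesis
  proof (induction A rule: finite_induct)
    case empty
    then show ?case by (simp add: sh_zero_left)
  next
    case (insert x F)
    then show ?case by (simp add: sh_add_left)
  qed
next
  case False
  then show ?thesis by (simp add: sh_zero_left)
qed

lemma sh_sum_right: "shuffle d (\<lambda>v. \<Sum>i\<in>A. f i v) w = (\<Sum>i\<in>A. shuffle d (f i) w)"
  by (simp only: sh_comm[of d] sh_sum_left)

lemma D_one_s: "D a one_s = (\<lambda>v. 0)"
  by (simp add: D_def one_s_def)

lemma sh_one_left_pt: "shuffle one_s d w = d w"
proof (induction w arbitrary: d)
  case Nil
  then show ?case by (simp add: sh_Nil one_s_def)
next
  case (Cons a w)
  show ?case unfolding sh_Cons D_one_s sh_zero_left Cons.IH by (simp add: D_apply)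
qed

lemma sh_one_left[simp]: "shuffle one_s d = d"
  using sh_one_left_pt by blast

lemma sh_one_right[simp]: "shuffle d one_s = d"
  by (simp only: sh_comm_fun[of d] sh_one_left)

lemma D_sh: "D a (shuffle c d) = (\<lambda>v. shuffle (D a c) d v + shuffle c (D a d) v)"
  by (simp add: D_def sh_Cons)

lemma sh_assoc_pt: "shuffle (shuffle c d) e w = shuffle c (shuffle d e) w"
proof (induction w arbitrary: c d e)
  case Nil
  then show ?case by (simp add: sh_Nil)
next
  case (Cons a w)
  show ?case unfolding sh_Cons D_sh sh_add_left sh_add_right Cons.IH by simp
qed

lemma sh_assoc: "shuffle (shuffle c d) e = shuffle c (shuffle d e)"
  using sh_assoc_pt by blast

lemma sh_lcomm: "shuffle c (shuffle d e) = shuffle d (shuffle c e)"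
  by (metis sh_assoc sh_comm_fun)

lemma sh_low: "low k c \<Longrightarrow> low l d \<Longrightarrow> low (k + l) (shuffle c d)"
  unfolding low_def
proof (intro allI impI)
  fix w :: "'a list"
  assume "\<forall>w. length w < k \<longrightarrow> c w = 0" "\<forall>w. length w < l \<longrightarrow> d w = 0" "length w < k + l"
  then show "shuffle c d w = 0"
  proof (induction w arbitrary: c d k l)
    case Nil
    then show ?case by (auto simp: sh_Nil)
  next
    case (Cons a w)
    have 1: "shuffle (D a c) d w = 0"
      by (rule Cons.IH[where k = "k - 1" and l = l]) (use Cons.prems in \<open>auto simp: D_apply\<close>)
    have 2: "shuffle c (D a d) w = 0"
      by (rule Cons.IH[where k = "k" and l = "l - 1"]) (use Cons.prems in \<open>auto simp: D_apply\<close>)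
    show ?case unfolding sh_Cons 1 2 by simp
  qed
qed

lemma low0[simp]: "low 0 s" by (simp add: low_def)

lemma sh_low_right: "low l d \<Longrightarrow> low l (shuffle c d)"
  using sh_low[of 0 c l d] by simp

lemma sh_rest: "(\<And>v. length v < length w \<Longrightarrow> h v = h' v) \<Longrightarrow>
   shuffle g h w - g [] * h w = shuffle g h' w - g [] * h' w"
proof (induction w arbitrary: g h h')
  case Nil
  then show ?case by (simp add: sh_Nil)
next
  case (Cons a w)
  have 1: "shuffle (D a g) h w = shuffle (D a g) h' w"
    by (rule sh_local) (use Cons.prems in \<open>auto simp: eqto_def\<close>)
  have 2: "shuffle g (D a h) w - g [] * D a h w = shuffle g (D a h') w - g [] * D a h' w"
    by (rule Cons.IH) (use Cons.prems in \<open>auto simp: D_apply\<close>)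
  show ?case unfolding sh_Cons using 1 2 by (simp add: D_apply)
qed



lemma fp_vec:
  fixes T :: "('i \<Rightarrow> 'x \<Rightarrow> real) \<Rightarrow> ('i \<Rightarrow> 'x \<Rightarrow> real)" and sz :: "'x \<Rightarrow> nat"
  assumes loc: "\<And>s t i x. (\<And>j y. sz y < sz x \<Longrightarrow> s j y = t j y) \<Longrightarrow> T s i x = T t i x"
  shows "\<exists>!h. T h = h"
proof -
  define X where "X n = (T ^^ n) (\<lambda>i x. 0)" for n
  have XS: "X (Suc n) = T (X n)" for n by (simp add: X_def)
  have stab: "\<forall>m\<ge>n. \<forall>i x. sz x < n \<longrightarrow> X m i x = X n i x" for n
  proof (induction n)
    case 0
    then show ?case by simp
  next
    case (Suc n)
    show ?case
    proof (intro allI impI)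
      fix m i x assume m: "Suc n \<le> m" and x: "sz x < Suc n"
      define m' where "m' = m - 1"
      have m': "m = Suc m'" "n \<le> m'" using m unfolding m'_def by simp_all
      have "X m i x = T (X m') i x" unfolding m'(1) XS ..
      also have "\<dots> = T (X n) i x"
      proof (rule loc)
        fix j y assume "sz y < sz x"
        then have "sz y < n" using x by simp
        then show "X m' j y = X n j y" using Suc.IH m'(2) by blast
      qed
      also have "\<dots> = X (Suc n) i x" unfolding XS ..
      finally show "X m i x = X (Suc n) i x" .
    qed
  qed
  define h where "h i x = X (Suc (sz x)) i x" for i x
  have hfix: "T h = h"
  proof (intro ext)
    fix i x
    have "T h i x = T (X (sz x)) i x"
    proof (rule loc)
      fix j y assume y: "sz y < sz x"
      have s1: "\<forall>m\<ge>Suc (sz y). \<forall>i x. sz x < Suc (sz y) \<longrightarrow> X m i x = X (Suc (sz y)) i x"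
        by (rule stab)
      have "Suc (sz y) \<le> sz x" using y by simp
      with s1 have "X (sz x) j y = X (Suc (sz y)) j y" by blast
      then show "h j y = X (sz x) j y" by (simp add: h_def)
    qed
    also have "\<dots> = X (Suc (sz x)) i x" unfolding XS ..
    finally show "T h i x = h i x" by (simp add: h_def)
  qed
  have uniq: "a = b" if a: "T a = a" and b: "T b = b" for a b
  proof -
    have "\<forall>i. a i x = b i x" for x
    proof (induction x rule: measure_induct_rule[of sz])
      case (less x)
      show ?case
      proof
        fix i
        have "a i x = T a i x" using a by simp
        also have "\<dots> = T b i x" by (rule loc) (use less in blast)
        also have "\<dots> = b i x" using b by simp
        finally show "a i x = b i x" .
      qed
    qed
    then show ?thesis by (intro ext) auto
  qed
  show ?thesis using hfix uniq by blast
qed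

lemma fp_scalar:
  fixes T :: "('x \<Rightarrow> real) \<Rightarrow> ('x \<Rightarrow> real)" and sz :: "'x \<Rightarrow> nat"
  assumes loc: "\<And>s t x. (\<And>y. sz y < sz x \<Longrightarrow> s y = t y) \<Longrightarrow> T s x = T t x"
  shows "\<exists>!h. T h = h"
proof -
  let ?T = "\<lambda>H (i::unit). T (H ())"
  have "\<exists>!H. ?T H = H"
    by (rule fp_vec[where sz = sz]) (rule loc, auto)
  then obtain H where H: "?T H = H" and HU: "\<And>H'. ?T H' = H' \<Longrightarrow> H' = H" by blast
  have e: "T (H ()) = H ()" using H by (metis)
  have u: "k = H ()" if "T k = k" for k
  proof -
    have "?T (\<lambda>_. k) = (\<lambda>_. k)" using that by simp
    then have "(\<lambda>_. k) = H" by (rule HU)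
    then show ?thesis by auto
  qed
  show ?thesis using e u by blast
qed

subsection \<open>Shuffle inverse\<close>

lemma sh_inv_ex1:
  assumes g0: "g [] \<noteq> 0"
  shows "\<exists>!h. shuffle g h = one_s"
proof -
  define T where "T h = (\<lambda>w. (one_s w - (shuffle g h w - g [] * h w)) / g [])" for h
  have iff: "T h = h \<longleftrightarrow> shuffle g h = one_s" for h
  proof
    assume Th: "T h = h"
    have "shuffle g h w = one_s w" for w
    proof -
      have "T h w = h w" using Th by simp
      then have "(one_s w - (shuffle g h w - g [] * h w)) / g [] = h w"
        unfolding T_def .
      then have "one_s w - (shuffle g h w - g [] * h w) = h w * g []"
        using g0 by (simp add: divide_eq_eq)
      then show ?thesis by (simp add: algebra_simps)
    qed
    then show "shuffle g h = one_s" by blast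
  next
    assume "shuffle g h = one_s"
    then show "T h = h" unfolding T_def using g0 by (auto simp: field_simps)
  qed
  have "\<exists>!h. T h = h"
  proof (rule fp_scalar[where sz = length])
    fix s t :: "'a list \<Rightarrow> real" and x :: "'a list"
    assume "\<And>y. length y < length x \<Longrightarrow> s y = t y"
    then have "shuffle g s x - g [] * s x = shuffle g t x - g [] * t x" by (rule sh_rest)
    then show "T s x = T t x" unfolding T_def by simp
  qed
  then show ?thesis using iff by simp
qed

lemma sh_inv: "g [] \<noteq> 0 \<Longrightarrow> shuffle g (shuffle_inv g) = one_s"
  unfolding shuffle_inv_def by (rule theI'[of "\<lambda>h. shuffle g h = one_s", OF sh_inv_ex1])

lemma sh_inv_unique: "g [] \<noteq> 0 \<Longrightarrow> shuffle g h = one_s \<Longrightarrow> shuffle_inv g = h"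
  unfolding shuffle_inv_def by (rule the1_equality[OF sh_inv_ex1])

lemma sh_cancel: "g [] \<noteq> 0 \<Longrightarrow> shuffle g h = one_s \<Longrightarrow> shuffle g h' = one_s \<Longrightarrow> h = h'"
  using sh_inv_unique by blast

subsection \<open>Cauchy inverse\<close>

lemma finite_msets_le:
  assumes "finite A"
  shows "finite {M. set_mset M \<subseteq> A \<and> size M \<le> n}"
proof -
  have "{M. set_mset M \<subseteq> A \<and> size M \<le> n} \<subseteq> mset ` {xs. set xs \<subseteq> A \<and> length xs \<le> n}"
  proof
    fix M assume M: "M \<in> {M. set_mset M \<subseteq> A \<and> size M \<le> n}"
    obtain xs where "mset xs = M" using ex_mset by blast
    then show "M \<in> mset ` {xs. set xs \<subseteq> A \<and> length xs \<le> n}" using M by auto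
  qed
  then show ?thesis by (rule finite_subset) (intro finite_imageI finite_lists_length_le assms)
qed

definition Pm :: "'q multiset \<Rightarrow> ('q multiset \<times> 'q multiset) set" where
  "Pm \<eta> = {(\<zeta>, \<nu>). \<zeta> + \<nu> = \<eta>}"

lemma finite_Pm: "finite (Pm \<eta>)"
proof -
  let ?S = "{M. set_mset M \<subseteq> set_mset \<eta> \<and> size M \<le> size \<eta>}"
  have "Pm \<eta> \<subseteq> ?S \<times> ?S" unfolding Pm_def by auto
  then show ?thesis by (rule finite_subset) (intro finite_cartesian_product finite_msets_le; simp)
qed

lemma cauchy_Pm: "cauchy d h \<eta> = (\<Sum>p\<in>Pm \<eta>. d (fst p) * h (snd p))"
  unfolding cauchy_def Pm_def by (simp add: case_prod_beta)

lemma cauchy_split: "cauchy d h \<eta> = d {#} * h \<eta> + (\<Sum>p\<in>Pm \<eta> - {({#}, \<eta>)}. d (fst p) * h (snd p))"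
proof -
  have "({#}, \<eta>) \<in> Pm \<eta>" by (simp add: Pm_def)
  then show ?thesis unfolding cauchy_Pm by (simp add: sum.remove[OF finite_Pm])
qed

lemma Pm_rest: "p \<in> Pm \<eta> - {({#}, \<eta>)} \<Longrightarrow> size (snd p) < size \<eta> \<and> fst p \<noteq> {#}"
  unfolding Pm_def by (cases p) (auto simp: nonempty_has_size)

lemma cauchy_one_left: "cauchy one_c h = h"
proof
  fix \<eta>
  have "(\<Sum>p\<in>Pm \<eta> - {({#}, \<eta>)}. one_c (fst p) * h (snd p)) = 0"
  proof (rule sum.neutral, intro ballI)
    fix p assume "p \<in> Pm \<eta> - {({#}, \<eta>)}"
    then have "fst p \<noteq> {#}" using Pm_rest by blast
    then show "one_c (fst p) * h (snd p) = 0" by (simp add: one_c_def)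
  qed
  then show "cauchy one_c h \<eta> = h \<eta>" unfolding cauchy_split by (simp add: one_c_def)
qed

lemma cauchy_Nil: "cauchy d h {#} = d {#} * h {#}"
proof -
  have "Pm ({#}::'a multiset) = {({#}, {#})}" unfolding Pm_def by auto
  then show ?thesis unfolding cauchy_split by simp
qed

lemma cauchy_inv_ex1:
  assumes d0: "d {#} \<noteq> 0"
  shows "\<exists>!h. cauchy d h = one_c"
proof -
  define T where "T h = (\<lambda>w. (one_c w - (cauchy d h w - d {#} * h w)) / d {#})" for h
  have iff: "T h = h \<longleftrightarrow> cauchy d h = one_c" for h
  proof
    assume Th: "T h = h"
    have "cauchy d h w = one_c w" for w
    proof -
      have "T h w = h w" using Th by simp
      then have "(one_c w - (cauchy d h w - d {#} * h w)) / d {#} = h w"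
        unfolding T_def .
      then have "one_c w - (cauchy d h w - d {#} * h w) = h w * d {#}"
        using d0 by (simp add: divide_eq_eq)
      then show ?thesis by (simp add: algebra_simps)
    qed
    then show "cauchy d h = one_c" by blast
  next
    assume "cauchy d h = one_c"
    then show "T h = h" unfolding T_def using d0 by (auto simp: field_simps)
  qed
  have "\<exists>!h. T h = h"
  proof (rule fp_scalar[where sz = size])
    fix s t :: "'a multiset \<Rightarrow> real" and x :: "'a multiset"
    assume st: "\<And>y. size y < size x \<Longrightarrow> s y = t y"
    have "(\<Sum>p\<in>Pm x - {({#}, x)}. d (fst p) * s (snd p)) = (\<Sum>p\<in>Pm x - {({#}, x)}. d (fst p) * t (snd p))"
    proof (rule sum.cong[OF refl])
      fix p assume "p \<in> Pm x - {({#}, x)}"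
      then have "size (snd p) < size x" using Pm_rest by blast
      then show "d (fst p) * s (snd p) = d (fst p) * t (snd p)" using st by simp
    qed
    then have "cauchy d s x - d {#} * s x = cauchy d t x - d {#} * t x"
      unfolding cauchy_split by simp
    then show "T s x = T t x" unfolding T_def by simp
  qed
  then show ?thesis using iff by simp
qed

lemma cauchy_inv: "d {#} \<noteq> 0 \<Longrightarrow> cauchy d (cauchy_inv d) = one_c"
  unfolding cauchy_inv_def by (rule theI'[of "\<lambda>h. cauchy d h = one_c", OF cauchy_inv_ex1])

lemma cauchy_inv_unique: "d {#} \<noteq> 0 \<Longrightarrow> cauchy d h = one_c \<Longrightarrow> cauchy_inv d = h"
  unfolding cauchy_inv_def by (rule the1_equality[OF cauchy_inv_ex1])

lemma cauchy_inv_one: "cauchy_inv one_c = one_c"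
  by (rule cauchy_inv_unique) (auto simp: one_c_def cauchy_one_left)

lemma cauchy_inv_0: "d {#} \<noteq> 0 \<Longrightarrow> cauchy_inv d {#} \<noteq> 0"
  using cauchy_inv[of d] cauchy_Nil[of d "cauchy_inv d"]
  by (metis mult_zero_right one_c_def zero_neq_one)



lemma cfc_sh: "comp_fun_commute (\<lambda>i s. shuffle (c i) s)"
  by unfold_locales (simp add: fun_eq_iff sh_lcomm)

lemma shuf_pow_empty[simp]: "shuf_pow c {#} = one_s"
  by (simp add: shuf_pow_def)

lemma shuf_pow_add_mset: "shuf_pow c (add_mset i \<eta>) = shuffle (c i) (shuf_pow c \<eta>)"
proof -
  interpret comp_fun_commute "\<lambda>i s. shuffle (c i) s" by (rule cfc_sh)
  show ?thesis unfolding shuf_pow_def by simp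
qed

lemma shuf_pow_union: "shuf_pow c (\<eta> + \<zeta>) = shuffle (shuf_pow c \<eta>) (shuf_pow c \<zeta>)"
proof (induction \<eta>)
  case empty
  then show ?case by simp
next
  case (add x \<eta>)
  then show ?case by (simp add: shuf_pow_add_mset sh_assoc)
qed

lemma low1: "low (Suc 0) s \<longleftrightarrow> s [] = 0"
  by (simp add: low_def)

lemma shuf_pow_low: "proper c \<Longrightarrow> low (size \<eta>) (shuf_pow c \<eta>)"
proof (induction \<eta>)
  case empty
  then show ?case by simp
next
  case (add x \<eta>)
  have "low (Suc 0) (c x)" using add.prems by (simp add: low1 proper_def)
  from sh_low[OF this add.IH[OF add.prems]] show ?case by (simp add: shuf_pow_add_mset)
qed

definition Mq :: "nat \<Rightarrow> 'q multiset set" where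
  "Mq n = {\<eta>. size \<eta> \<le> n}"

lemma finite_Mq: "finite (Mq n :: 'q::finite multiset set)"
  using finite_msets_le[of "UNIV :: 'q set" n] by (simp add: Mq_def)

definition wf1 :: "'q cs \<Rightarrow> ('q \<Rightarrow> 'a ncs) \<Rightarrow> 'a ncs" where
  "wf1 x c w = infsum (\<lambda>\<eta>. x \<eta> * shuf_pow c \<eta> w) UNIV"

lemma wf_comp_wf1: "wf_comp d c = (\<lambda>i. wf1 (d i) c)"
  by (simp add: wf_comp_def wf1_def[abs_def])

lemma wf1_fin:
  fixes c :: "'q::finite \<Rightarrow> 'a ncs"
  assumes "proper c" "length w \<le> n"
  shows "wf1 x c w = (\<Sum>\<eta>\<in>Mq n. x \<eta> * shuf_pow c \<eta> w)"
  unfolding wf1_def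
proof (rule infsum_supp[OF finite_Mq])
  fix \<eta> :: "'q multiset" assume "\<eta> \<notin> Mq n"
  then have "length w < size \<eta>" using assms(2) by (simp add: Mq_def)
  then have "shuf_pow c \<eta> w = 0" using shuf_pow_low[OF assms(1), of \<eta>] by (simp add: low_def)
  then show "x \<eta> * shuf_pow c \<eta> w = 0" by simp
qed

lemma wf1_one: "wf1 one_c c = one_s"
proof
  fix w
  have "wf1 one_c c w = (\<Sum>\<eta>\<in>{{#}}. one_c \<eta> * shuf_pow c \<eta> w)"
    unfolding wf1_def by (rule infsum_supp) (auto simp: one_c_def)
  then show "wf1 one_c c w = one_s w" by (simp add: one_c_def)
qed

lemma wf1_Nil:
  fixes c :: "'q::finite \<Rightarrow> 'a ncs"
  assumes "proper c"
  shows "wf1 x c [] = x {#}"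
proof -
  have M0: "Mq 0 = {{#}}" by (auto simp: Mq_def)
  have "wf1 x c [] = (\<Sum>\<eta>\<in>Mq 0. x \<eta> * shuf_pow c \<eta> [])" by (rule wf1_fin[OF assms]) simp
  also have "\<dots> = x {#}" unfolding M0 by (simp add: one_s_def)
  finally show ?thesis .
qed

lemma wf1_cauchy:
  fixes c :: "'q::finite \<Rightarrow> 'a ncs"
  assumes pc: "proper c"
  shows "wf1 (cauchy x y) c = shuffle (wf1 x c) (wf1 y c)"
proof
  fix w :: "'a list"
  define n where "n = length w"
  let ?P = "shuf_pow c"
  define F where "F x = (\<lambda>v. \<Sum>\<eta>\<in>Mq n. x \<eta> * ?P \<eta> v)" for x :: "'q cs"
  define f where "f p = x (fst p) * y (snd p) * ?P (fst p + snd p) w" for p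
  define Q where "Q = {p :: 'q multiset \<times> 'q multiset. size (fst p) + size (snd p) \<le> n}"
  have QM: "Q \<subseteq> Mq n \<times> Mq n" by (auto simp: Q_def Mq_def)
  have finQ: "finite Q" by (rule finite_subset[OF QM]) (intro finite_cartesian_product finite_Mq)
  have vanish: "?P \<eta> w = 0" if "n < size \<eta>" for \<eta>
    using shuf_pow_low[OF pc, of \<eta>] that by (simp add: low_def n_def)
  have "shuffle (wf1 x c) (wf1 y c) w = shuffle (F x) (F y) w"
    by (rule sh_local) (auto simp: eqto_def F_def n_def intro: wf1_fin[OF pc])
  also have "\<dots> = (\<Sum>\<zeta>\<in>Mq n. \<Sum>\<nu>\<in>Mq n. x \<zeta> * y \<nu> * shuffle (?P \<zeta>) (?P \<nu>) w)"
    unfolding F_def sh_sum_left sh_sum_right sh_smult_left sh_smult_right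
    by (simp add: algebra_simps)
  also have "\<dots> = (\<Sum>p\<in>Mq n \<times> Mq n. f p)"
    unfolding sum.cartesian_product f_def shuf_pow_union by (simp add: case_prod_beta)
  also have "\<dots> = (\<Sum>p\<in>Q. f p)"
  proof (rule sum.mono_neutral_right[OF _ QM])
    show "finite ((Mq n :: 'q multiset set) \<times> (Mq n :: 'q multiset set))" by (intro finite_cartesian_product finite_Mq)
    show "\<forall>p\<in>(Mq n :: 'q multiset set) \<times> (Mq n :: 'q multiset set) - Q. f p = 0"
    proof
      fix p assume "p \<in> Mq n \<times> Mq n - Q"
      then have "n < size (fst p + snd p)" by (auto simp: Q_def)
      then show "f p = 0" by (simp add: f_def vanish)
    qed
  qed
  also have "\<dots> = (\<Sum>\<eta>\<in>Mq n. \<Sum>p\<in>Pm \<eta>. f p)"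
  proof -
    have QU: "Q = (\<Union>\<eta>\<in>Mq n. Pm \<eta>)" by (auto simp: Q_def Pm_def Mq_def)
    show ?thesis unfolding QU
      by (rule sum.UNION_disjoint[OF finite_Mq]) (simp add: finite_Pm, auto simp: Pm_def)
  qed
  also have "\<dots> = (\<Sum>\<eta>\<in>Mq n. cauchy x y \<eta> * ?P \<eta> w)"
  proof (rule sum.cong[OF refl])
    fix \<eta> :: "'q multiset" assume "\<eta> \<in> Mq n"
    have "(\<Sum>p\<in>Pm \<eta>. f p) = (\<Sum>p\<in>Pm \<eta>. x (fst p) * y (snd p) * ?P \<eta> w)"
      by (rule sum.cong[OF refl]) (auto simp: f_def Pm_def)
    also have "\<dots> = cauchy x y \<eta> * ?P \<eta> w"
      unfolding cauchy_Pm sum_distrib_right ..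
    finally show "(\<Sum>p\<in>Pm \<eta>. f p) = cauchy x y \<eta> * ?P \<eta> w" .
  qed
  also have "\<dots> = wf1 (cauchy x y) c w"
    by (rule wf1_fin[OF pc, symmetric]) (simp add: n_def)
  finally show "wf1 (cauchy x y) c w = shuffle (wf1 x c) (wf1 y c) w" ..
qed

lemma wf1_inv:
  fixes c :: "'q::finite \<Rightarrow> 'a ncs"
  assumes pc: "proper c" and d0: "d {#} \<noteq> 0"
  shows "wf1 (cauchy_inv d) c = shuffle_inv (wf1 d c)"
proof -
  have "shuffle (wf1 d c) (wf1 (cauchy_inv d) c) = one_s"
    using wf1_cauchy[OF pc, of d "cauchy_inv d"] unfolding cauchy_inv[of d, OF d0] wf1_one by simp
  then show ?thesis
    by (intro sh_inv_unique[symmetric]) (simp_all add: wf1_Nil[OF pc] d0)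
qed



type_synonym 'm sr = "'m option ncs"

definition Lw :: "nat \<Rightarrow> 'm option list set" where
  "Lw n = {\<eta>. length \<eta> \<le> n}"

lemma finite_Lw: "finite (Lw n :: 'm::finite option list set)"
  using finite_lists_length_le[of "UNIV :: 'm option set" n] by (simp add: Lw_def)

lemma lcat_low: "low k s \<Longrightarrow> low (Suc k) (lcat a s)"
  unfolding low_def lcat_def by (auto split: list.splits)

lemma phibar_low: "low k s \<Longrightarrow> low (k + length \<eta>) (phibar g \<eta> s)"
proof (induction \<eta>)
  case Nil
  then show ?case by simp
next
  case (Cons b \<eta>)
  show ?case
  proof (cases b)
    case None
    then show ?thesis using lcat_low[OF Cons.IH[OF Cons.prems]] by simp
  next
    case (Some i)
    then show ?thesis using lcat_low[OF sh_low_right[OF Cons.IH[OF Cons.prems]]] by simp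
  qed
qed

lemma phibar_low1: "low (length \<eta>) (phibar g \<eta> one_s)"
  using phibar_low[where k=0 and s=one_s and g=g and \<eta>=\<eta>] by simp

lemma phibar_vanish: "length w < length \<eta> \<Longrightarrow> phibar g \<eta> one_s w = 0"
  using phibar_low1[of \<eta> g] by (simp add: low_def)

lemma mc_fin:
  fixes g :: "'m::finite \<Rightarrow> 'm sr"
  assumes "length w \<le> n"
  shows "mixed_comp c g w = (\<Sum>\<eta>\<in>Lw n. c \<eta> * phibar g \<eta> one_s w)"
  unfolding mixed_comp_def
proof (rule infsum_supp[OF finite_Lw])
  fix \<eta> :: "'m option list" assume "\<eta> \<notin> Lw n"
  then have "length w < length \<eta>" using assms by (simp add: Lw_def)
  then show "c \<eta> * phibar g \<eta> one_s w = 0" by (simp add: phibar_vanish)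
qed

lemma mc_Nil:
  fixes g :: "'m::finite \<Rightarrow> 'm sr"
  shows "mixed_comp c g [] = c []"
proof -
  have L0: "Lw 0 = {[]}" by (auto simp: Lw_def)
  have "mixed_comp c g [] = (\<Sum>\<eta>\<in>Lw 0. c \<eta> * phibar g \<eta> one_s [])" by (rule mc_fin) simp
  also have "\<dots> = c []" unfolding L0 by (simp add: one_s_def)
  finally show ?thesis .
qed

lemma mc_Cons_gen:
  fixes g :: "'m::finite \<Rightarrow> 'm sr"
  shows "mixed_comp c g (a # w) = infsum (\<lambda>\<eta>. c (a # \<eta>) * phibar g (a # \<eta>) one_s (a # w)) UNIV"
proof -
  let ?f = "\<lambda>\<eta>. c \<eta> * phibar g \<eta> one_s (a # w)"
  have inj: "inj_on (Cons a) UNIV" by (auto simp: inj_on_def)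
  have "mixed_comp c g (a # w) = infsum ?f UNIV" by (simp add: mixed_comp_def)
  also have "\<dots> = infsum ?f (range (Cons a))"
  proof (rule infsum_cong_neutral)
    fix \<eta> assume e: "\<eta> \<in> UNIV - range (Cons a)"
    show "?f \<eta> = 0"
    proof (cases \<eta>)
      case Nil
      then show ?thesis by (simp add: one_s_def)
    next
      case (Cons b \<eta>')
      then have "b \<noteq> a" using e by auto
      then show ?thesis using Cons by (cases b) auto
    qed
  qed auto
  also have "\<dots> = infsum (?f \<circ> Cons a) UNIV" by (rule infsum_reindex[OF inj])
  finally show ?thesis by (simp add: o_def)
qed

lemma mc_None:
  fixes g :: "'m::finite \<Rightarrow> 'm sr"
  shows "mixed_comp c g (None # w) = mixed_comp (D None c) g w"
  unfolding mc_Cons_gen by (simp add: mixed_comp_def D_apply)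

lemma mc_sum_gen:
  fixes g :: "'m::finite \<Rightarrow> 'm sr"
  assumes "finite A"
  shows "mixed_comp (\<lambda>v. \<Sum>j\<in>A. a j * f j v) g w = (\<Sum>j\<in>A. a j * mixed_comp (f j) g w)"
proof -
  have "mixed_comp (\<lambda>v. \<Sum>j\<in>A. a j * f j v) g w =
        (\<Sum>\<eta>\<in>Lw (length w). (\<Sum>j\<in>A. a j * f j \<eta>) * phibar g \<eta> one_s w)" by (rule mc_fin) simp
  also have "\<dots> = (\<Sum>j\<in>A. a j * (\<Sum>\<eta>\<in>Lw (length w). f j \<eta> * phibar g \<eta> one_s w))"
    by (simp add: sum_distrib_right sum_distrib_left mult.assoc sum.swap[of _ A])
  also have "\<dots> = (\<Sum>j\<in>A. a j * mixed_comp (f j) g w)"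
    by (simp add: mc_fin[symmetric])
  finally show ?thesis .
qed

lemma mc_add:
  fixes g :: "'m::finite \<Rightarrow> 'm sr"
  shows "mixed_comp (\<lambda>v. c v + c' v) g w = mixed_comp c g w + mixed_comp c' g w"
  using mc_sum_gen[of "{True, False}" "\<lambda>_. 1" "\<lambda>b. if b then c else c'" g w] by simp

lemma mc_add_fun:
  fixes g :: "'m::finite \<Rightarrow> 'm sr"
  shows "mixed_comp (\<lambda>v. c v + c' v) g = (\<lambda>w. mixed_comp c g w + mixed_comp c' g w)"
  using mc_add by blast

lemma mc_local_c:
  fixes g :: "'m::finite \<Rightarrow> 'm sr"
  assumes "eqto (length w) c c'"
  shows "mixed_comp c g w = mixed_comp c' g w"
proof -
  have "mixed_comp c g w = (\<Sum>\<eta>\<in>Lw (length w). c \<eta> * phibar g \<eta> one_s w)" by (rule mc_fin) simp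
  also have "\<dots> = (\<Sum>\<eta>\<in>Lw (length w). c' \<eta> * phibar g \<eta> one_s w)"
    using assms by (intro sum.cong) (auto simp: eqto_def Lw_def)
  also have "\<dots> = mixed_comp c' g w" by (rule mc_fin[symmetric]) simp
  finally show ?thesis .
qed

lemma mc_Some:
  fixes g :: "'m::finite \<Rightarrow> 'm sr"
  shows "mixed_comp c g (Some i # w) = shuffle (g i) (mixed_comp (D (Some i) c) g) w"
proof -
  let ?c = "D (Some i) c"
  let ?n = "length w"
  have "mixed_comp c g (Some i # w) = infsum (\<lambda>\<eta>. ?c \<eta> * shuffle (g i) (phibar g \<eta> one_s) w) UNIV"
    unfolding mc_Cons_gen by (simp add: D_apply)
  also have "\<dots> = (\<Sum>\<eta>\<in>Lw ?n. ?c \<eta> * shuffle (g i) (phibar g \<eta> one_s) w)"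
  proof (rule infsum_supp[OF finite_Lw])
    fix \<eta> :: "'m option list" assume "\<eta> \<notin> Lw ?n"
    then have "length w < length \<eta>" by (simp add: Lw_def)
    then have "shuffle (g i) (phibar g \<eta> one_s) w = 0"
      using sh_low_right[OF phibar_low1[of \<eta> g], of "g i"] by (simp add: low_def)
    then show "?c \<eta> * shuffle (g i) (phibar g \<eta> one_s) w = 0" by simp
  qed
  also have "\<dots> = shuffle (g i) (\<lambda>v. \<Sum>\<eta>\<in>Lw ?n. ?c \<eta> * phibar g \<eta> one_s v) w"
    unfolding sh_sum_right sh_smult_right ..
  also have "\<dots> = shuffle (g i) (mixed_comp ?c g) w"
    by (rule sh_local) (auto simp: eqto_def mc_fin)
  finally show ?thesis .
qed

lemma D_mc_None:
  fixes g :: "'m::finite \<Rightarrow> 'm sr"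
  shows "D None (mixed_comp c g) = mixed_comp (D None c) g"
  by (rule ext) (simp add: D_apply mc_None)

lemma D_mc_Some:
  fixes g :: "'m::finite \<Rightarrow> 'm sr"
  shows "D (Some i) (mixed_comp c g) = shuffle (g i) (mixed_comp (D (Some i) c) g)"
  by (rule ext) (simp add: D_apply mc_Some)

lemma mc_one:
  fixes g :: "'m::finite \<Rightarrow> 'm sr"
  shows "mixed_comp one_s g = one_s"
proof
  fix w
  have "mixed_comp one_s g w = (\<Sum>\<eta>\<in>{[]}. one_s \<eta> * phibar g \<eta> one_s w)"
    unfolding mixed_comp_def by (rule infsum_supp) (auto simp: one_s_def)
  then show "mixed_comp one_s g w = one_s w" by (simp add: one_s_def)
qed

lemma phibar_id: "phibar (\<lambda>i. one_s) \<eta> one_s = (\<lambda>w. if w = \<eta> then 1 else 0)"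
proof (induction \<eta>)
  case Nil
  then show ?case by (simp add: one_s_def[abs_def])
next
  case (Cons b \<eta>)
  have "lcat b (\<lambda>w. if w = \<eta> then 1 else 0) = (\<lambda>w. if w = b # \<eta> then 1 else 0)"
    by (rule ext) (simp add: lcat_def split: list.splits)
  then show ?case using Cons by (cases b) simp_all
qed

lemma mc_id:
  fixes c :: "'m::finite sr"
  shows "mixed_comp c (\<lambda>i. one_s) = c"
proof
  fix w
  have "mixed_comp c (\<lambda>i. one_s) w = (\<Sum>\<eta>\<in>{w}. c \<eta> * (if w = \<eta> then 1 else 0))"
    unfolding mixed_comp_def phibar_id by (rule infsum_supp) auto
  then show "mixed_comp c (\<lambda>i. one_s) w = c w" by simp
qed



lemma mc_local_g:
  fixes g g' :: "'m::finite \<Rightarrow> 'm sr"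
  assumes gg: "\<And>i v. length v < n \<Longrightarrow> g i v = g' i v"
  shows "length w \<le> n \<Longrightarrow> mixed_comp c g w = mixed_comp c g' w"
proof (induction w arbitrary: c rule: length_induct)
  case (1 w)
  note IH = 1(1)[rule_format]
  show ?case
  proof (cases w)
    case Nil
    then show ?thesis by (simp add: mc_Nil)
  next
    case (Cons a w')
    show ?thesis
    proof (cases a)
      case None
      then show ?thesis using Cons IH[of w'] 1(2) by (simp add: mc_None)
    next
      case (Some i)
      have "shuffle (g i) (mixed_comp (D (Some i) c) g) w' = shuffle (g' i) (mixed_comp (D (Some i) c) g') w'"
      proof (rule sh_local)
        show "eqto (length w') (g i) (g' i)" using gg 1(2) Cons by (auto simp: eqto_def)
        show "eqto (length w') (mixed_comp (D (Some i) c) g) (mixed_comp (D (Some i) c) g')"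
          unfolding eqto_def
        proof (intro allI impI)
          fix v :: "'m option list" assume "length v \<le> length w'"
          then show "mixed_comp (D (Some i) c) g v = mixed_comp (D (Some i) c) g' v"
            using IH[of v] 1(2) Cons by simp
        qed
      qed
      then show ?thesis using Cons Some by (simp add: mc_Some)
    qed
  qed
qed

lemma mc_hom_pt:
  fixes g :: "'m::finite \<Rightarrow> 'm sr"
  shows "mixed_comp (shuffle c d) g w = shuffle (mixed_comp c g) (mixed_comp d g) w"
proof (induction w arbitrary: c d rule: length_induct)
  case (1 w)
  note IH = 1[rule_format]
  show ?case
  proof (cases w)
    case Nil
    then show ?thesis by (simp add: mc_Nil sh_Nil)
  next
    case (Cons a w')
    show ?thesis
    proof (cases a)
      case None
      have "mixed_comp (shuffle c d) g (None # w') =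
            mixed_comp (shuffle (D None c) d) g w' + mixed_comp (shuffle c (D None d)) g w'"
        by (simp add: mc_None D_sh mc_add)
      also have "\<dots> = shuffle (mixed_comp (D None c) g) (mixed_comp d g) w' +
                      shuffle (mixed_comp c g) (mixed_comp (D None d) g) w'"
        using IH[of w'] Cons by simp
      also have "\<dots> = shuffle (mixed_comp c g) (mixed_comp d g) (None # w')"
        by (simp add: sh_Cons D_mc_None)
      finally show ?thesis using Cons None by simp
    next
      case (Some i)
      let ?x = "Some i"
      have "mixed_comp (shuffle c d) g (?x # w') =
            shuffle (g i) (\<lambda>v. mixed_comp (shuffle (D ?x c) d) g v + mixed_comp (shuffle c (D ?x d)) g v) w'"
        by (simp add: mc_Some D_sh mc_add_fun)
      also have "\<dots> = shuffle (g i) (\<lambda>v. shuffle (mixed_comp (D ?x c) g) (mixed_comp d g) v +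
                      shuffle (mixed_comp c g) (mixed_comp (D ?x d) g) v) w'"
      proof (rule sh_local)
        show "eqto (length w') (g i) (g i)" by (simp add: eqto_def)
        show "eqto (length w')
          (\<lambda>v. mixed_comp (shuffle (D ?x c) d) g v + mixed_comp (shuffle c (D ?x d)) g v)
          (\<lambda>v. shuffle (mixed_comp (D ?x c) g) (mixed_comp d g) v +
                      shuffle (mixed_comp c g) (mixed_comp (D ?x d) g) v)"
          unfolding eqto_def
        proof (intro allI impI)
          fix v :: "'m option list" assume "length v \<le> length w'"
          then have "length v < length w" using Cons by simp
          then show "mixed_comp (shuffle (D ?x c) d) g v + mixed_comp (shuffle c (D ?x d)) g v =
             shuffle (mixed_comp (D ?x c) g) (mixed_comp d g) v +
                      shuffle (mixed_comp c g) (mixed_comp (D ?x d) g) v"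
            using IH[of v] by simp
        qed
      qed
      also have "\<dots> = shuffle (g i) (shuffle (mixed_comp (D ?x c) g) (mixed_comp d g)) w' +
                      shuffle (g i) (shuffle (mixed_comp c g) (mixed_comp (D ?x d) g)) w'"
        by (rule sh_add_right)
      also have "\<dots> = shuffle (shuffle (g i) (mixed_comp (D ?x c) g)) (mixed_comp d g) w' +
                      shuffle (mixed_comp c g) (shuffle (g i) (mixed_comp (D ?x d) g)) w'"
        by (simp add: sh_assoc sh_lcomm)
      also have "\<dots> = shuffle (mixed_comp c g) (mixed_comp d g) (?x # w')"
        by (simp add: sh_Cons D_mc_Some)
      finally show ?thesis using Cons Some by simp
    qed
  qed
qed

lemma mc_hom:
  fixes g :: "'m::finite \<Rightarrow> 'm sr"
  shows "mixed_comp (shuffle c d) g = shuffle (mixed_comp c g) (mixed_comp d g)"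
  using mc_hom_pt by blast

lemma mc_comp_pt:
  fixes g h :: "'m::finite \<Rightarrow> 'm sr"
  shows "mixed_comp (mixed_comp c g) h w = mixed_comp c (\<lambda>i. shuffle (mixed_comp (g i) h) (h i)) w"
proof (induction w arbitrary: c rule: length_induct)
  case (1 w)
  note IH = 1[rule_format]
  define k where "k = (\<lambda>i. shuffle (mixed_comp (g i) h) (h i))"
  have "mixed_comp (mixed_comp c g) h w = mixed_comp c k w"
  proof (cases w)
    case Nil
    then show ?thesis by (simp add: mc_Nil)
  next
    case (Cons a w')
    show ?thesis
    proof (cases a)
      case None
      then show ?thesis using Cons IH[of w'] by (simp add: mc_None D_mc_None k_def)
    next
      case (Some i)
      let ?x = "Some i"
      let ?M = "mixed_comp (g i) h"
      have "mixed_comp (mixed_comp c g) h (?x # w') =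
            shuffle (h i) (shuffle ?M (mixed_comp (mixed_comp (D ?x c) g) h)) w'"
        by (simp add: mc_Some D_mc_Some mc_hom)
      also have "\<dots> = shuffle (h i) (shuffle ?M (mixed_comp (D ?x c) k)) w'"
      proof (rule sh_local)
        show "eqto (length w') (h i) (h i)" by (simp add: eqto_def)
        show "eqto (length w') (shuffle ?M (mixed_comp (mixed_comp (D ?x c) g) h))
                  (shuffle ?M (mixed_comp (D ?x c) k))"
          unfolding eqto_def
        proof (intro allI impI)
          fix v :: "'m option list" assume v: "length v \<le> length w'"
          show "shuffle ?M (mixed_comp (mixed_comp (D ?x c) g) h) v = shuffle ?M (mixed_comp (D ?x c) k) v"
          proof (rule sh_local)
            show "eqto (length v) ?M ?M" by (simp add: eqto_def)
            show "eqto (length v) (mixed_comp (mixed_comp (D ?x c) g) h) (mixed_comp (D ?x c) k)"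
              unfolding eqto_def
            proof (intro allI impI)
              fix u :: "'m option list" assume "length u \<le> length v"
              then have "length u < length w" using v Cons by simp
              then show "mixed_comp (mixed_comp (D ?x c) g) h u = mixed_comp (D ?x c) k u"
                using IH[of u] by (simp add: k_def)
            qed
          qed
        qed
      qed
      also have "\<dots> = shuffle (k i) (mixed_comp (D ?x c) k) w'"
        by (simp add: k_def sh_assoc sh_lcomm)
      also have "\<dots> = mixed_comp c k (?x # w')"
        by (simp add: mc_Some)
      finally show ?thesis using Cons Some by simp
    qed
  qed
  then show ?case by (simp add: k_def)
qed

lemma mc_comp:
  fixes g h :: "'m::finite \<Rightarrow> 'm sr"
  shows "mixed_comp (mixed_comp c g) h = mixed_comp c (\<lambda>i. shuffle (mixed_comp (g i) h) (h i))"
  using mc_comp_pt by blast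

lemma mc_shuf_pow:
  fixes g :: "'m::finite \<Rightarrow> 'm sr"
  shows "mixed_comp (shuf_pow c \<eta>) g = shuf_pow (\<lambda>j. mixed_comp (c j) g) \<eta>"
proof (induction \<eta>)
  case empty
  then show ?case by (simp add: mc_one)
next
  case (add x \<eta>)
  then show ?case by (simp add: shuf_pow_add_mset mc_hom)
qed

lemma mc_proper:
  fixes g :: "'m::finite \<Rightarrow> 'm sr"
  shows "proper (\<lambda>j. mixed_comp (c j) g) = proper c"
  by (simp add: proper_def mc_Nil)

lemma mc_wf1:
  fixes g :: "'m::finite \<Rightarrow> 'm sr" and c :: "'q::finite \<Rightarrow> 'm sr"
  assumes pc: "proper c"
  shows "mixed_comp (wf1 x c) g = wf1 x (\<lambda>j. mixed_comp (c j) g)"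
proof
  fix w :: "'m option list"
  let ?n = "length w"
  have pc': "proper (\<lambda>j. mixed_comp (c j) g)" using pc by (simp add: mc_proper)
  have "mixed_comp (wf1 x c) g w = mixed_comp (\<lambda>v. \<Sum>\<eta>\<in>Mq ?n. x \<eta> * shuf_pow c \<eta> v) g w"
    by (rule mc_local_c) (auto simp: eqto_def intro: wf1_fin[OF pc])
  also have "\<dots> = (\<Sum>\<eta>\<in>Mq ?n. x \<eta> * mixed_comp (shuf_pow c \<eta>) g w)"
    by (rule mc_sum_gen[OF finite_Mq])
  also have "\<dots> = (\<Sum>\<eta>\<in>Mq ?n. x \<eta> * shuf_pow (\<lambda>j. mixed_comp (c j) g) \<eta> w)"
    by (simp add: mc_shuf_pow)
  also have "\<dots> = wf1 x (\<lambda>j. mixed_comp (c j) g) w"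
    by (rule wf1_fin[OF pc', symmetric]) simp
  finally show "mixed_comp (wf1 x c) g w = wf1 x (\<lambda>j. mixed_comp (c j) g) w" .
qed



lemma ci_ex1:
  fixes G :: "'m::finite \<Rightarrow> 'm sr"
  shows "\<exists>!h. h = (\<lambda>i. mixed_comp (shuffle_inv (G i)) h)"
proof -
  have "\<exists>!h. (\<lambda>i. mixed_comp (shuffle_inv (G i)) h) = h"
  proof (rule fp_vec[where sz = length])
    fix s t :: "'m \<Rightarrow> 'm sr" and i and x :: "'m option list"
    assume "\<And>j y. length y < length x \<Longrightarrow> s j y = t j y"
    then show "mixed_comp (shuffle_inv (G i)) s x = mixed_comp (shuffle_inv (G i)) t x"
      by (intro mc_local_g[where n = "length x"]) auto
  qed
  then show ?thesis by (metis)
qed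

lemma ci_fix:
  fixes G :: "'m::finite \<Rightarrow> 'm sr"
  shows "comp_inv G = (\<lambda>i. mixed_comp (shuffle_inv (G i)) (comp_inv G))"
  unfolding comp_inv_def by (rule theI'[OF ci_ex1])

lemma ci_unique:
  fixes G :: "'m::finite \<Rightarrow> 'm sr"
  shows "k = (\<lambda>i. mixed_comp (shuffle_inv (G i)) k) \<Longrightarrow> comp_inv G = k"
  unfolding comp_inv_def by (rule the1_equality[OF ci_ex1])

lemma ci_char:
  fixes G :: "'m::finite \<Rightarrow> 'm sr"
  assumes G0: "\<And>i. G i [] \<noteq> 0"
  shows "shuffle (mixed_comp (G i) (comp_inv G)) (comp_inv G i) = one_s"
proof -
  let ?k = "comp_inv G"
  have "comp_inv G i = mixed_comp (shuffle_inv (G i)) ?k" by (subst ci_fix) simp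
  then have "shuffle (mixed_comp (G i) ?k) (comp_inv G i) = mixed_comp (shuffle (G i) (shuffle_inv (G i))) ?k"
    by (simp add: mc_hom)
  also have "\<dots> = one_s" using sh_inv[of "G i", OF G0] by (simp add: mc_one)
  finally show ?thesis .
qed

lemma ci_eq:
  fixes G k :: "'m::finite \<Rightarrow> 'm sr"
  assumes G0: "\<And>i. G i [] \<noteq> 0"
    and kk: "\<And>i. shuffle (mixed_comp (G i) k) (k i) = one_s"
  shows "comp_inv G = k"
proof (rule ci_unique)
  show "k = (\<lambda>i. mixed_comp (shuffle_inv (G i)) k)"
  proof
    fix i
    have a: "shuffle (mixed_comp (G i) k) (mixed_comp (shuffle_inv (G i)) k) = one_s"
      using sh_inv[of "G i", OF G0] by (simp add: mc_hom[symmetric] mc_one)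
    have n: "mixed_comp (G i) k [] \<noteq> 0" using G0 by (simp add: mc_Nil)
    show "k i = mixed_comp (shuffle_inv (G i)) k"
      by (rule sh_cancel[OF n kk a])
  qed
qed

lemma sh_AC4: "shuffle (shuffle a b) (shuffle m k) = shuffle (shuffle a m) (shuffle b k)"
  by (simp only: sh_assoc sh_lcomm[of b m k])

theorem theorem19:
  fixes c :: "'q::finite \<Rightarrow> ('m::finite option list \<Rightarrow> real)"
    and d1 d2 :: "'m \<Rightarrow> 'q multiset \<Rightarrow> real"
  assumes "proper c" and "purely_improper_c d1" and "purely_improper_c d2"
  shows "proper (sfb c d1) \<and> sfb c (\<lambda>i. one_c) = c \<and>
         sfb (sfb c d1) d2 = sfb c (\<lambda>i. cauchy (d1 i) (d2 i))"
proof -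
  note pc = assms(1)
  have d10: "d1 i {#} \<noteq> 0" for i using assms(2) by (simp add: purely_improper_c_def)
  have d20: "d2 i {#} \<noteq> 0" for i using assms(3) by (simp add: purely_improper_c_def)
  have sfb_eq: "sfb c' d = (\<lambda>j. mixed_comp (c' j) (comp_inv (\<lambda>i. wf1 (cauchy_inv (d i)) c')))"
    for c' :: "'q \<Rightarrow> 'm sr" and d :: "'m \<Rightarrow> 'q cs"
    by (simp add: sfb_def wf_comp_wf1)
  have P1: "proper (sfb c d1)" using pc by (simp add: sfb_eq proper_def mc_Nil)
  have P2: "sfb c (\<lambda>i. one_c) = c"
  proof -
    have ci1: "comp_inv (\<lambda>i::'m. one_s) = (\<lambda>i. one_s :: 'm sr)"
      by (rule ci_eq) (simp_all add: one_s_def mc_one)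
    show ?thesis unfolding sfb_eq cauchy_inv_one wf1_one ci1 mc_id ..
  qed
  define A where "A = (\<lambda>i. wf1 (cauchy_inv (d1 i)) c)"
  define B where "B = (\<lambda>i. wf1 (cauchy_inv (d2 i)) c)"
  define k1 where "k1 = comp_inv A"
  define c' where "c' = (\<lambda>j. mixed_comp (c j) k1)"
  have pc': "proper c'" using pc by (simp add: c'_def mc_proper)
  define B' where "B' = (\<lambda>i. wf1 (cauchy_inv (d2 i)) c')"
  have B'B: "B' i = mixed_comp (B i) k1" for i
    unfolding B'_def B_def c'_def by (simp add: mc_wf1[OF pc])
  define k2 where "k2 = comp_inv B'"
  define K where "K = (\<lambda>i. shuffle (mixed_comp (k1 i) k2) (k2 i))"
  define E where "E = (\<lambda>i. wf1 (cauchy_inv (cauchy (d1 i) (d2 i))) c)"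
  have A0: "A i [] \<noteq> 0" for i unfolding A_def using cauchy_inv_0[of "d1 i", OF d10]
    by (simp add: wf1_Nil[OF pc])
  have B'0: "B' i [] \<noteq> 0" for i unfolding B'_def using cauchy_inv_0[of "d2 i", OF d20]
    by (simp add: wf1_Nil[OF pc'])
  have dd0: "cauchy (d1 i) (d2 i) {#} \<noteq> 0" for i using d10 d20 by (simp add: cauchy_Nil)
  have E0: "E i [] \<noteq> 0" for i unfolding E_def using cauchy_inv_0[of "cauchy (d1 i) (d2 i)", OF dd0]
    by (simp add: wf1_Nil[OF pc])
  have EAB: "E i = shuffle (A i) (B i)" for i
  proof -
    let ?X = "wf1 (d1 i) c" and ?Y = "wf1 (d2 i) c"
    have X0: "?X [] \<noteq> 0" using d10 by (simp add: wf1_Nil[OF pc])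
    have Y0: "?Y [] \<noteq> 0" using d20 by (simp add: wf1_Nil[OF pc])
    have XY0: "shuffle ?X ?Y [] \<noteq> 0" using X0 Y0 by (simp add: sh_Nil)
    have Ai: "A i = shuffle_inv ?X" unfolding A_def by (rule wf1_inv[where d="d1 i", OF pc d10[of i]])
    have Bi: "B i = shuffle_inv ?Y" unfolding B_def by (rule wf1_inv[where d="d2 i", OF pc d20[of i]])
    have Ei: "E i = shuffle_inv (shuffle ?X ?Y)" unfolding E_def
      by (simp add: wf1_inv[where d="cauchy (d1 i) (d2 i)", OF pc dd0[of i]] wf1_cauchy[OF pc])
    have "shuffle (shuffle ?X ?Y) (shuffle (A i) (B i)) = one_s"
      unfolding Ai Bi unfolding sh_AC4[of ?X ?Y "shuffle_inv ?X" "shuffle_inv ?Y"]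
        sh_inv[of ?X, OF X0] sh_inv[of ?Y, OF Y0] by simp
    then have "shuffle_inv (shuffle ?X ?Y) = shuffle (A i) (B i)"
      by (rule sh_inv_unique[where g="shuffle ?X ?Y", OF XY0])
    then show ?thesis using Ei by simp
  qed
  have ciE: "comp_inv E = K"
  proof (rule ci_eq[where G=E, OF E0])
    fix i
    have F1: "shuffle (mixed_comp (mixed_comp (A i) k1) k2) (mixed_comp (k1 i) k2) = one_s"
    proof -
      have "shuffle (mixed_comp (A i) k1) (k1 i) = one_s" unfolding k1_def by (rule ci_char[where G=A, OF A0])
      then have "mixed_comp (shuffle (mixed_comp (A i) k1) (k1 i)) k2 = one_s" by (simp add: mc_one)
      then show ?thesis by (simp add: mc_hom)
    qed
    have F2: "shuffle (mixed_comp (mixed_comp (B i) k1) k2) (k2 i) = one_s"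
      using ci_char[of B' i, OF B'0] unfolding k2_def[symmetric] B'B .
    let ?a = "mixed_comp (mixed_comp (A i) k1) k2" and ?b = "mixed_comp (mixed_comp (B i) k1) k2"
    have "mixed_comp (E i) K = shuffle ?a ?b"
      by (simp add: EAB mc_hom mc_comp K_def)
    then have "shuffle (mixed_comp (E i) K) (K i) = shuffle (shuffle ?a ?b) (shuffle (mixed_comp (k1 i) k2) (k2 i))"
      by (simp add: K_def)
    also have "\<dots> = shuffle (shuffle ?a (mixed_comp (k1 i) k2)) (shuffle ?b (k2 i))"
      by (rule sh_AC4)
    also have "\<dots> = one_s" unfolding F1 F2 by simp
    finally show "shuffle (mixed_comp (E i) K) (K i) = one_s" .
  qed
  have P3: "sfb (sfb c d1) d2 = sfb c (\<lambda>i. cauchy (d1 i) (d2 i))"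
  proof -
    have s1: "sfb c d1 = c'" by (simp add: sfb_eq c'_def k1_def A_def)
    have "sfb (sfb c d1) d2 = (\<lambda>j. mixed_comp (mixed_comp (c j) k1) k2)"
      unfolding s1 by (simp add: sfb_eq k2_def B'_def c'_def)
    also have "\<dots> = (\<lambda>j. mixed_comp (c j) K)" by (simp add: mc_comp K_def)
    also have "\<dots> = sfb c (\<lambda>i. cauchy (d1 i) (d2 i))"
      by (simp add: sfb_eq ciE[symmetric] E_def)
    finally show ?thesis .
  qed
  show ?thesis using P1 P2 P3 by blast
qed

end
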